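(* Let $r\ge 2$, $e\ge1$ and $0\le p\le\lfloor re/2\rfloor$ be integers. Let $\mathcal{M}$ be the set of $(r+1)\times(r+1)$ matrices $M=(m_{ij})$ with nonnegative integer entries, zero diagonal entries, and with both row sums and column sums given by the vector $(e,\dots,e,re-2p)$ (the first $r$ entries equal to $e$). Define $$\mathcal{T}_{r,e,p}(t;z_1,\dots,z_r)=\sum_{M\in\mathcal{M}}\frac{\prod_{1\le i,j\le r}(z_i-z_j)^{m_{ij}}\prod_{1\le i\le r}(t-z_i)^{m_{i,r+1}}\prod_{1\le j\le r}(t-z_j)^{m_{r+1,j}}}{\prod_{1\le i,j\le r+1}m_{ij}!}.$$ Then $\mathcal{T}_{r,e,p}$ is not identically zero as a polynomial in $t,z_1,\dots,z_r$. *)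

theory Defs
  imports Complex_Main
begin

text \<open>Matrices (r+1)x(r+1) are functions nat => nat => nat, indices 0..r
  (index r plays the role of r+1 in the paper), zero outside {0..r}x{0..r}.\<close>

definition margin :: "nat \<Rightarrow> nat \<Rightarrow> nat \<Rightarrow> nat \<Rightarrow> nat" where
  "margin r e p i = (if i < r then e else r * e - 2 * p)"

definition Mset :: "nat \<Rightarrow> nat \<Rightarrow> nat \<Rightarrow> (nat \<Rightarrow> nat \<Rightarrow> nat) set" where
  "Mset r e p = {m. (\<forall>i j. (i > r \<or> j > r) \<longrightarrow> m i j = 0)
                  \<and> (\<forall>i\<le>r. m i i = 0)
                  \<and> (\<forall>i\<le>r. (\<Sum>j\<le>r. m i j) = margin r e p i)
                  \<and> (\<forall>j\<le>r. (\<Sum>i\<le>r. m i j) = margin r e p j)}"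

definition Tpoly :: "nat \<Rightarrow> nat \<Rightarrow> nat \<Rightarrow> real \<Rightarrow> (nat \<Rightarrow> real) \<Rightarrow> real" where
  "Tpoly r e p t z =
     (\<Sum>m\<in>Mset r e p.
        (\<Prod>i<r. \<Prod>j<r. (z i - z j) ^ m i j)
        * (\<Prod>i<r. (t - z i) ^ m i r)
        * (\<Prod>j<r. (t - z j) ^ m r j)
        / (\<Prod>i\<le>r. \<Prod>j\<le>r. fact (m i j)))"

end

theory Submission
  imports Defs "HOL-Library.FuncSet"
begin


definition rf :: "int \<Rightarrow> real" where
  "rf n = (if n < 0 then 0 else 1 / fact (nat n))"

lemma rf_rec: "rf n = of_int (n+1) * rf (n+1)"
proof (cases "n < -1")
  case True then show ?thesis by (simp add: rf_def)
next
  case False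
  show ?thesis
  proof (cases "n = -1")
    case True then show ?thesis by (simp add: rf_def)
  next
    case False
    then have n0: "n \<ge> 0" using \<open>\<not> n < -1\<close> by simp
    have e: "nat (n+1) = Suc (nat n)" using n0 by simp
    have f: "fact (Suc (nat n)) = real (Suc (nat n)) * fact (nat n)" by (simp add: fact_Suc)
    have g: "real (Suc (nat n)) = of_int (n+1)" using n0 by simp
    have h: "fact (nat n) > (0::real)" by simp
    have "rf (n+1) = 1 / fact (Suc (nat n))" using n0 e by (simp add: rf_def)
    also have "\<dots> = 1 / (of_int (n+1) * fact (nat n))" using f g by simp
    finally have X: "rf (n+1) = 1 / (of_int (n+1) * fact (nat n))" .
    have nz: "real_of_int n + 1 \<noteq> 0" using n0 by linarith
    have "of_int (n+1) * rf (n+1) = 1 / fact (nat n)" unfolding X using nz h by simp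
    then show ?thesis using n0 by (simp add: rf_def)
  qed
qed

lemma rf_neg: "n < 0 \<Longrightarrow> rf n = 0" by (simp add: rf_def)
lemma rf_pos: "n \<ge> 0 \<Longrightarrow> rf n > 0" by (simp add: rf_def)

definition sg :: "int \<Rightarrow> real" where "sg k = (-1) ^ nat \<bar>k\<bar>"

lemma sg_step: "sg (k+1) = - sg k"
proof (cases "k \<ge> 0")
  case True
  then have e: "nat \<bar>k+1\<bar> = Suc (nat \<bar>k\<bar>)" by simp
  show ?thesis unfolding sg_def e power_Suc by simp
next
  case False
  then have e: "nat \<bar>k\<bar> = Suc (nat \<bar>k+1\<bar>)" by simp
  show ?thesis unfolding sg_def e power_Suc by simp
qed

definition dt :: "int \<Rightarrow> int \<Rightarrow> int \<Rightarrow> int \<Rightarrow> real" where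
  "dt a b c k = sg k * rf (a+k) * rf (a-k) * rf (b+k) * rf (b-k) * rf (c+k) * rf (c-k)"

definition GG :: "int \<Rightarrow> int \<Rightarrow> int \<Rightarrow> int \<Rightarrow> real" where
  "GG a b c k = - sg k * rf (a+k) * rf (a+1-k) * rf (b+k-1) * rf (b-k) * rf (c+k-1) * rf (c-k)"

lemma wz_step:
  "2 * (of_int ((a+1)*(a+b+1)*(a+c+1)) * dt (a+1) b c k - of_int (a+b+c+1) * dt a b c k)
     = GG a b c (k+1) - GG a b c k"
proof -
  define P where "P = sg k * rf (a+1+k) * rf (a+1-k) * rf (b+k) * rf (b-k) * rf (c+k) * rf (c-k)"
  have r1: "rf (a+k) = of_int (a+k+1) * rf (a+1+k)" using rf_rec[of "a+k"] by (simp add: ac_simps)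
  have r2: "rf (a-k) = of_int (a-k+1) * rf (a+1-k)"
  proof -
    have "rf (a-k) = of_int (a-k+1) * rf (a-k+1)" by (rule rf_rec)
    moreover have "a-k+1 = a+1-k" by simp
    ultimately show ?thesis by metis
  qed
  have r3: "rf (b+k-1) = of_int (b+k) * rf (b+k)" using rf_rec[of "b+k-1"] by simp
  have r4: "rf (b-(k+1)) = of_int (b-k) * rf (b-k)" using rf_rec[of "b-(k+1)"] by (simp add: algebra_simps)
  have r5: "rf (c+k-1) = of_int (c+k) * rf (c+k)" using rf_rec[of "c+k-1"] by simp
  have r6: "rf (c-(k+1)) = of_int (c-k) * rf (c-k)" using rf_rec[of "c-(k+1)"] by (simp add: algebra_simps)
  have L: "of_int ((a+1)*(a+b+1)*(a+c+1)) * dt (a+1) b c k - of_int (a+b+c+1) * dt a b c k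
     = P * of_int ((a+1)*(a+b+1)*(a+c+1) - (a+b+c+1)*(a+k+1)*(a-k+1))"
    unfolding dt_def P_def r1 r2 by (simp add: algebra_simps)
  have e1: "a + 1 + k = a + (k+1)" "a + 1 - (k + 1) = a - k" "b + (k + 1) - 1 = b + k" "c + (k + 1) - 1 = c + k"
    by simp_all
  have R: "GG a b c (k+1) - GG a b c k
     = P * of_int ((a-k+1)*(b-k)*(c-k) + (a+k+1)*(b+k)*(c+k))"
    unfolding GG_def sg_step e1(2,3,4) r2 r3 r4 r5 r6 r1 P_def e1(1)[symmetric] by (simp add: algebra_simps)
  have Q: "2 * ((a+1)*(a+b+1)*(a+c+1) - (a+b+c+1)*(a+k+1)*(a-k+1)) = ((a-k+1)*(b-k)*(c-k) + (a+k+1)*(b+k)*(c+k))"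
      by algebra
  have Q': "2 * real_of_int ((a+1)*(a+b+1)*(a+c+1) - (a+b+c+1)*(a+k+1)*(a-k+1)) = of_int ((a-k+1)*(b-k)*(c-k) + (a+k+1)*(b+k)*(c+k))"
    using arg_cong[OF Q, of real_of_int] by simp
  show ?thesis
    unfolding L R Q'[symmetric] by simp
qed

lemma tele_int: "(\<Sum>k\<in>{l..l + int n}. f (k+1) - f k) = f (l + int n + 1) - (f l :: real)"
proof (induction n)
  case 0 then show ?case by simp
next
  case (Suc n)
  have e: "{l..l + int (Suc n)} = insert (1 + (l + int n)) {l..l + int n}"
    using atLeastAtMostPlus1_int_conv[of l "l + int n"] by (simp add: ac_simps)
  have "(\<Sum>k\<in>{l..l + int (Suc n)}. f (k+1) - f k) = (f (l + int n + 2) - f (l + int n + 1)) + (\<Sum>k\<in>{l..l + int n}. f (k+1) - f k)"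
    unfolding e by (simp add: ac_simps)
  also have "\<dots> = f (l + int n + 2) - f l" using Suc by simp
  also have "l + int n + 2 = l + int (Suc n) + 1" by simp
  finally show ?case .
qed

definition DS :: "nat \<Rightarrow> nat \<Rightarrow> nat \<Rightarrow> real" where
  "DS a b c = (\<Sum>k\<in>{-int a..int a}. dt (int a) (int b) (int c) k)"

lemma dt_out: "\<bar>k\<bar> > a \<Longrightarrow> dt a b c k = 0"
  by (cases "k \<ge> 0") (auto simp: dt_def rf_neg)

lemma DS_wide: "DS a b c = (\<Sum>k\<in>{-int a - 1..int a + 1}. dt (int a) (int b) (int c) k)"
  unfolding DS_def
proof (rule sum.mono_neutral_left)
  show "\<forall>i\<in>{- int a - 1..int a + 1} - {- int a..int a}. dt (int a) (int b) (int c) i = 0"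
  proof
    fix i assume "i \<in> {- int a - 1..int a + 1} - {- int a..int a}"
    then have "\<bar>i\<bar> > int a" by auto
    then show "dt (int a) (int b) (int c) i = 0" by (rule dt_out)
  qed
qed auto

lemma sum_lin: "(\<Sum>k\<in>I. 2 * (c1 * X k - c2 * Y k)) = 2 * (c1 * sum X I - c2 * sum Y I)" for c1 c2 :: real
  by (simp add: sum_subtractf flip: sum_distrib_left)

lemma DS_rec: "of_int ((int a+1)*(int a+int b+1)*(int a+int c+1)) * DS (Suc a) b c = of_int (int a+int b+int c+1) * DS a b c"
proof -
  let ?I = "{-int a - 1..int a + 1}"
  have "2 * (of_int ((int a+1)*(int a+int b+1)*(int a+int c+1)) * DS (Suc a) b c - of_int (int a+int b+int c+1) * DS a b c)
     = (\<Sum>k\<in>?I. 2 * (of_int ((int a+1)*(int a+int b+1)*(int a+int c+1)) * dt (int a+1) b c k - of_int (int a+int b+int c+1) * dt a b c k))"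
  proof -
    have e: "{-int (Suc a)..int (Suc a)} = ?I" "int (Suc a) = int a + 1" by simp_all
    have A: "DS (Suc a) b c = (\<Sum>k\<in>?I. dt (int a+1) b c k)" unfolding DS_def e(1) unfolding e(2) ..
    show ?thesis unfolding A DS_wide[of a] sum_lin ..
  qed
  also have "\<dots> = (\<Sum>k\<in>?I. GG a b c (k+1) - GG a b c k)"
    by (simp only: wz_step)
  also have "?I = {(-int a - 1)..(-int a - 1) + int (2*a+2)}" by simp
  also have "(\<Sum>k\<in>\<dots>. GG a b c (k+1) - GG a b c k) = GG a b c (int a + 2) - GG a b c (-int a - 1)"
    by (subst tele_int) (simp add: algebra_simps)
  also have "\<dots> = 0" by (simp add: GG_def rf_neg)
  finally show ?thesis by simp
qed

lemma DS_pos: "DS a b c > 0"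
proof (induction a)
  case 0
  have "DS 0 b c = rf 0 * rf 0 * rf b * rf b * rf c * rf c" by (simp add: DS_def dt_def sg_def)
  then show ?case by (simp add: rf_pos)
next
  case (Suc a)
  have "of_int ((int a+1)*(int a+int b+1)*(int a+int c+1)) * DS (Suc a) b c > 0"
    unfolding DS_rec using Suc by simp
  moreover have "(of_int ((int a+1)*(int a+int b+1)*(int a+int c+1)) :: real) > 0" by simp
  ultimately show ?case by (metis zero_less_mult_pos)
qed



definition Mats :: "nat set \<Rightarrow> nat set \<Rightarrow> (nat \<Rightarrow> nat) \<Rightarrow> (nat \<Rightarrow> nat) \<Rightarrow> (nat \<Rightarrow> nat \<Rightarrow> nat) set" where
  "Mats I J \<rho> \<sigma> = {M. (\<forall>i j. (i \<notin> I \<or> j \<notin> J) \<longrightarrow> M i j = 0)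
       \<and> (\<forall>i\<in>I. (\<Sum>j\<in>J. M i j) = \<rho> i) \<and> (\<forall>j\<in>J. (\<Sum>i\<in>I. M i j) = \<sigma> j)}"

definition wt :: "nat set \<Rightarrow> nat set \<Rightarrow> (nat \<Rightarrow> nat \<Rightarrow> real) \<Rightarrow> (nat \<Rightarrow> nat \<Rightarrow> nat) \<Rightarrow> real" where
  "wt I J w M = (\<Prod>i\<in>I. \<Prod>j\<in>J. w i j ^ M i j / fact (M i j))"

definition WW :: "nat set \<Rightarrow> nat set \<Rightarrow> (nat \<Rightarrow> nat \<Rightarrow> real) \<Rightarrow> (nat \<Rightarrow> nat) \<Rightarrow> (nat \<Rightarrow> nat) \<Rightarrow> real" where
  "WW I J w \<rho> \<sigma> = (\<Sum>M\<in>Mats I J \<rho> \<sigma>. wt I J w M)"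

lemma finite_funs:
  assumes "finite D" "finite S"
  shows "finite {f. \<forall>x. (x \<notin> D \<longrightarrow> f x = c) \<and> (x \<in> D \<longrightarrow> f x \<in> S)}"
proof (rule finite_subset)
  show "{f. \<forall>x. (x \<notin> D \<longrightarrow> f x = c) \<and> (x \<in> D \<longrightarrow> f x \<in> S)}
        \<subseteq> (\<lambda>g x. if x \<in> D then g x else c) ` (PiE D (\<lambda>_. S))"
  proof
    fix f assume f: "f \<in> {f. \<forall>x. (x \<notin> D \<longrightarrow> f x = c) \<and> (x \<in> D \<longrightarrow> f x \<in> S)}"
    have "f = (\<lambda>x. if x \<in> D then restrict f D x else c)" using f by (auto simp: fun_eq_iff)
    moreover have "restrict f D \<in> PiE D (\<lambda>_. S)" using f by auto
    ultimately show "f \<in> (\<lambda>g x. if x \<in> D then g x else c) ` (PiE D (\<lambda>_. S))" by blast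
  qed
  show "finite ((\<lambda>g x. if x \<in> D then g x else c) ` (PiE D (\<lambda>_. S)))"
    using assms by (intro finite_imageI finite_PiE) auto
qed

lemma finite_bounded_mats:
  assumes "finite I" "finite J"
  shows "finite {M::nat\<Rightarrow>nat\<Rightarrow>nat. \<forall>i j. ((i \<notin> I \<or> j \<notin> J) \<longrightarrow> M i j = 0) \<and> M i j \<le> B}"
proof -
  let ?R = "{f::nat\<Rightarrow>nat. \<forall>x. (x \<notin> J \<longrightarrow> f x = 0) \<and> (x \<in> J \<longrightarrow> f x \<in> {..B})}"
  have fR: "finite ?R" using assms by (intro finite_funs) auto
  have "finite {M. \<forall>x. (x \<notin> I \<longrightarrow> M x = (\<lambda>_. 0)) \<and> (x \<in> I \<longrightarrow> M x \<in> ?R)}"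
    using assms fR by (intro finite_funs) auto
  then show ?thesis by (rule finite_subset[rotated]) (auto simp: fun_eq_iff)
qed

lemma finite_Mats:
  assumes "finite I" "finite J"
  shows "finite (Mats I J \<rho> \<sigma>)"
proof -
  have "Mats I J \<rho> \<sigma> \<subseteq> {M. \<forall>i j. ((i \<notin> I \<or> j \<notin> J) \<longrightarrow> M i j = 0) \<and> M i j \<le> sum \<rho> I}"
  proof (clarify, intro conjI)
    fix M i j assume M: "M \<in> Mats I J \<rho> \<sigma>"
    then show "(i \<notin> I \<or> j \<notin> J) \<longrightarrow> M i j = 0" by (simp add: Mats_def)
    show "M i j \<le> sum \<rho> I"
    proof (cases "i \<in> I \<and> j \<in> J")
      case True
      then have "M i j \<le> (\<Sum>j\<in>J. M i j)" using assms by (intro member_le_sum) auto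
      also have "\<dots> = \<rho> i" using M True by (simp add: Mats_def)
      also have "\<dots> \<le> sum \<rho> I" using assms True by (intro member_le_sum) auto
      finally show ?thesis .
    next
      case False then show ?thesis using M by (auto simp: Mats_def)
    qed
  qed
  then show ?thesis using finite_bounded_mats[OF assms] by (rule finite_subset)
qed

lemma binom_split:
  "(x::real) ^ u / fact u * (x ^ v / fact v) = x ^ (u+v) / fact (u+v) * real ((u+v) choose u)"
proof -
  have "real ((u+v) choose u) = fact (u+v) / (fact u * fact v)"
    using binomial_fact[of u "u+v", where 'a=real] by simp
  then show ?thesis by (simp add: power_add field_simps)
qed

definition VV :: "nat set \<Rightarrow> (nat \<Rightarrow> nat) \<Rightarrow> nat \<Rightarrow> (nat \<Rightarrow> nat) set" where
  "VV J U k = {u. (\<forall>j. j \<notin> J \<longrightarrow> u j = 0) \<and> (\<forall>j. u j \<le> U j) \<and> sum u J = k}"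

lemma finite_VV: assumes "finite J" shows "finite (VV J U k)"
proof -
  have "VV J U k \<subseteq> {f. \<forall>x. (x \<notin> J \<longrightarrow> f x = 0) \<and> (x \<in> J \<longrightarrow> f x \<in> {..sum U J})}"
  proof (clarify, intro conjI impI)
    fix u x assume u: "u \<in> VV J U k"
    show "x \<notin> J \<Longrightarrow> u x = 0" using u by (simp add: VV_def)
    assume x: "x \<in> J"
    have "u x \<le> U x" using u by (simp add: VV_def)
    also have "U x \<le> sum U J" using assms x by (intro member_le_sum) auto
    finally show "u x \<in> {..sum U J}" by simp
  qed
  moreover have "finite {f. \<forall>x. (x \<notin> J \<longrightarrow> f x = 0) \<and> (x \<in> J \<longrightarrow> f x \<in> {..sum U J})}"
    using assms by (intro finite_funs) auto
  ultimately show ?thesis by (rule finite_subset)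
qed

lemma vmulti:
  assumes "finite J"
  shows "(\<Sum>u\<in>VV J U k. \<Prod>j\<in>J. real (U j choose u j)) = real (sum U J choose k)"
  using assms
proof (induction J arbitrary: k rule: finite_induct)
  case empty
  show ?case
  proof (cases "k = 0")
    case True
    then have "VV {} U k = {\<lambda>_. 0}" by (auto simp: VV_def fun_eq_iff)
    then show ?thesis using True by simp
  next
    case False
    then have "VV {} U k = {}" by (auto simp: VV_def)
    then show ?thesis using False by simp
  qed
next
  case (insert j0 J0)
  let ?J = "insert j0 J0"
  let ?f = "\<lambda>u. \<Prod>j\<in>?J. real (U j choose u j)"
  have img: "(\<lambda>u. u j0) ` VV ?J U k \<subseteq> {..k}"
  proof
    fix x assume "x \<in> (\<lambda>u. u j0) ` VV ?J U k"
    then obtain u where u: "u \<in> VV ?J U k" and x: "x = u j0" by auto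
    have "u j0 \<le> sum u ?J" using insert by (intro member_le_sum) auto
    then show "x \<in> {..k}" using u x by (simp add: VV_def)
  qed
  have "(\<Sum>u\<in>VV ?J U k. ?f u) = (\<Sum>x\<in>{..k}. \<Sum>u\<in>{u. u \<in> VV ?J U k \<and> u j0 = x}. ?f u)"
    using sum.group[OF finite_VV[OF insert(1)[THEN finite_insert[THEN iffD2]]] _ img, of ?f] by simp
  also have "\<dots> = (\<Sum>x\<in>{..k}. real (U j0 choose x) * real (sum U J0 choose (k - x)))"
  proof (rule sum.cong[OF refl])
    fix x assume x: "x \<in> {..k}"
    have f_split: "?f u = real (U j0 choose u j0) * (\<Prod>j\<in>J0. real (U j choose u j))" for u
      using insert by simp
    show "(\<Sum>u\<in>{u. u \<in> VV ?J U k \<and> u j0 = x}. ?f u) = real (U j0 choose x) * real (sum U J0 choose (k - x))"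
    proof (cases "x \<le> U j0")
      case False
      then have E: "{u. u \<in> VV ?J U k \<and> u j0 = x} = {}" by (auto simp: VV_def)
      show ?thesis unfolding E using False by simp
    next
      case True
      have bij: "bij_betw (\<lambda>u. u(j0 := 0)) {u. u \<in> VV ?J U k \<and> u j0 = x} (VV J0 U (k - x))"
      proof (rule bij_betw_byWitness[where f'="\<lambda>v. v(j0 := x)"])
        show "\<forall>a\<in>{u. u \<in> VV ?J U k \<and> u j0 = x}. (a(j0 := 0))(j0 := x) = a" by auto
        show "\<forall>a'\<in>VV J0 U (k - x). (a'(j0 := x))(j0 := 0) = a'"
          using insert by (auto simp: VV_def fun_eq_iff)
        show "(\<lambda>u. u(j0 := 0)) ` {u. u \<in> VV ?J U k \<and> u j0 = x} \<subseteq> VV J0 U (k - x)"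
        proof (rule image_subsetI)
          fix u assume "u \<in> {u. u \<in> VV ?J U k \<and> u j0 = x}"
          then have u: "u \<in> VV ?J U k" and ux: "u j0 = x" by auto
          have s: "sum u ?J = u j0 + sum u J0" using insert by simp
          have s2: "sum (u(j0 := 0)) J0 = sum u J0" using insert by (intro sum.cong) auto
          show "u(j0 := 0) \<in> VV J0 U (k - x)" using u ux s s2 by (auto simp: VV_def)
        qed
        show "(\<lambda>v. v(j0 := x)) ` VV J0 U (k - x) \<subseteq> {u. u \<in> VV ?J U k \<and> u j0 = x}"
        proof (rule image_subsetI)
          fix v assume v: "v \<in> VV J0 U (k - x)"
          have s: "sum (v(j0 := x)) ?J = x + sum (v(j0 := x)) J0" using insert by simp
          have s2: "sum (v(j0 := x)) J0 = sum v J0" using insert by (intro sum.cong) auto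
          show "v(j0 := x) \<in> {u. u \<in> VV ?J U k \<and> u j0 = x}" using v s s2 True x by (auto simp: VV_def)
        qed
      qed
      have "(\<Sum>u\<in>{u. u \<in> VV ?J U k \<and> u j0 = x}. ?f u)
          = (\<Sum>u\<in>{u. u \<in> VV ?J U k \<and> u j0 = x}. real (U j0 choose x) * (\<Prod>j\<in>J0. real (U j choose (u(j0:=0)) j)))"
      proof (rule sum.cong[OF refl])
        fix u assume u: "u \<in> {u. u \<in> VV ?J U k \<and> u j0 = x}"
        have "(\<Prod>j\<in>J0. real (U j choose (u(j0:=0)) j)) = (\<Prod>j\<in>J0. real (U j choose u j))"
          using insert by (intro prod.cong) auto
        then show "?f u = real (U j0 choose x) * (\<Prod>j\<in>J0. real (U j choose (u(j0:=0)) j))"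
          using u f_split by simp
      qed
      also have "\<dots> = real (U j0 choose x) * (\<Sum>v\<in>VV J0 U (k - x). \<Prod>j\<in>J0. real (U j choose v j))"
        unfolding sum_distrib_left[symmetric] sum.reindex_bij_betw[OF bij, of "\<lambda>v. \<Prod>j\<in>J0. real (U j choose v j)"] ..
      also have "\<dots> = real (U j0 choose x) * real (sum U J0 choose (k - x))" using insert by simp
      finally show ?thesis .
    qed
  qed
  also have "\<dots> = real ((\<Sum>x\<le>k. (U j0 choose x) * (sum U J0 choose (k - x))))" by simp
  also have "\<dots> = real ((U j0 + sum U J0) choose k)" by (simp only: vandermonde)
  also have "U j0 + sum U J0 = sum U ?J" using insert by simp
  finally show ?case .
qed

lemma sum_rm:
  assumes "finite I" "i \<in> I" "i' \<in> I" "i \<noteq> i'"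
  shows "sum f (I - {i'}) = f i + sum f (I - {i,i'})"
proof -
  have "I - {i'} - {i} = I - {i,i'}" by auto
  then show ?thesis using assms sum.remove[of "I - {i'}" i f] by simp
qed

lemma sum_two:
  assumes "finite I" "i \<in> I" "i' \<in> I" "i \<noteq> i'"
  shows "sum f I = f i + f i' + sum f (I - {i,i'})"
  using assms sum.remove[of I i' f] sum_rm[OF assms, of f] by (simp add: ac_simps)

lemma prod_rm:
  assumes "finite I" "i \<in> I" "i' \<in> I" "i \<noteq> i'"
  shows "prod f (I - {i'}) = f i * prod f (I - {i,i'})"
proof -
  have "I - {i'} - {i} = I - {i,i'}" by auto
  then show ?thesis using assms prod.remove[of "I - {i'}" i f] by simp
qed

lemma prod_two:
  assumes "finite I" "i \<in> I" "i' \<in> I" "i \<noteq> i'"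
  shows "prod f I = f i * f i' * prod f (I - {i,i'})"
  using assms prod.remove[of I i' f] prod_rm[OF assms, of f] by (simp add: ac_simps)

lemma row_merge:
  assumes fI: "finite I" and fJ: "finite J" and i: "i \<in> I" and i': "i' \<in> I" and ne: "i \<noteq> i'"
    and w: "\<And>j. w i' j = w i j"
  shows "WW I J w \<rho> \<sigma> = real (\<rho> i + \<rho> i' choose \<rho> i) * WW (I - {i'}) J w (\<rho>(i := \<rho> i + \<rho> i')) \<sigma>"
proof -
  define I' where "I' = I - {i'}"
  define \<rho>' where "\<rho>' = \<rho>(i := \<rho> i + \<rho> i')"
  define \<phi> where "\<phi> M = M(i := (\<lambda>j. M i j + M i' j), i' := (\<lambda>j. 0))" for M :: "nat \<Rightarrow> nat \<Rightarrow> nat"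
  have fI': "finite I'" using fI by (simp add: I'_def)
  have iI': "i \<in> I'" using i ne by (simp add: I'_def)
  have I'I: "I' - {i} = I - {i,i'}" by (auto simp: I'_def)
  have img: "\<phi> ` Mats I J \<rho> \<sigma> \<subseteq> Mats I' J \<rho>' \<sigma>"
  proof (rule image_subsetI)
    fix M assume M: "M \<in> Mats I J \<rho> \<sigma>"
    have supp: "\<And>a b. a \<notin> I \<or> b \<notin> J \<Longrightarrow> M a b = 0" and rows: "\<And>a. a \<in> I \<Longrightarrow> (\<Sum>j\<in>J. M a j) = \<rho> a"
      and cols: "\<And>b. b \<in> J \<Longrightarrow> (\<Sum>a\<in>I. M a b) = \<sigma> b" using M by (auto simp: Mats_def)
    show "\<phi> M \<in> Mats I' J \<rho>' \<sigma>"
      unfolding Mats_def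
    proof (intro CollectI conjI allI impI ballI)
      fix a b assume "a \<notin> I' \<or> b \<notin> J"
      then show "\<phi> M a b = 0" using supp i ne by (auto simp: \<phi>_def I'_def)
    next
      fix a assume a: "a \<in> I'"
      show "(\<Sum>j\<in>J. \<phi> M a j) = \<rho>' a"
      proof (cases "a = i")
        case True
        then show ?thesis using rows[OF i] rows[OF i'] ne by (simp add: \<phi>_def \<rho>'_def sum.distrib)
      next
        case False
        then show ?thesis using a rows[of a] by (simp add: \<phi>_def \<rho>'_def I'_def)
      qed
    next
      fix b assume b: "b \<in> J"
      have "(\<Sum>a\<in>I'. \<phi> M a b) = \<phi> M i b + (\<Sum>a\<in>I - {i,i'}. \<phi> M a b)"
        unfolding I'_def by (rule sum_rm[OF fI i i' ne])
      also have "(\<Sum>a\<in>I - {i,i'}. \<phi> M a b) = (\<Sum>a\<in>I - {i,i'}. M a b)"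
        by (intro sum.cong) (auto simp: \<phi>_def)
      also have "\<phi> M i b = M i b + M i' b" using ne by (simp add: \<phi>_def)
      also have "M i b + M i' b + (\<Sum>a\<in>I - {i,i'}. M a b) = (\<Sum>a\<in>I. M a b)"
        using sum_two[OF fI i i' ne, of "\<lambda>a. M a b"] by simp
      finally show "(\<Sum>a\<in>I'. \<phi> M a b) = \<sigma> b" using cols[OF b] by simp
    qed
  qed
  have grp: "WW I J w \<rho> \<sigma> = (\<Sum>M'\<in>Mats I' J \<rho>' \<sigma>. \<Sum>M\<in>{M. M \<in> Mats I J \<rho> \<sigma> \<and> \<phi> M = M'}. wt I J w M)"
    unfolding WW_def using sum.group[OF finite_Mats[OF fI fJ] finite_Mats[OF fI' fJ] img, of "wt I J w"] by simp
  have fib: "(\<Sum>M\<in>{M. M \<in> Mats I J \<rho> \<sigma> \<and> \<phi> M = M'}. wt I J w M) = real (\<rho> i + \<rho> i' choose \<rho> i) * wt I' J w M'"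
    if M': "M' \<in> Mats I' J \<rho>' \<sigma>" for M'
  proof -
    let ?F = "{M. M \<in> Mats I J \<rho> \<sigma> \<and> \<phi> M = M'}"
    have supp': "\<And>a b. a \<notin> I' \<or> b \<notin> J \<Longrightarrow> M' a b = 0" and rows': "\<And>a. a \<in> I' \<Longrightarrow> (\<Sum>j\<in>J. M' a j) = \<rho>' a"
      and cols': "\<And>b. b \<in> J \<Longrightarrow> (\<Sum>a\<in>I'. M' a b) = \<sigma> b" using M' by (auto simp: Mats_def)
    have rowi: "(\<Sum>j\<in>J. M' i j) = \<rho> i + \<rho> i'" using rows'[OF iI'] by (simp add: \<rho>'_def)
    have fibM: "M' i j = M i j + M i' j" "\<And>a. a \<noteq> i \<Longrightarrow> a \<noteq> i' \<Longrightarrow> M' a = M a" if "M \<in> ?F" for M j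
      using that ne by (auto simp: \<phi>_def)
    have wtM: "wt I J w M = wt I' J w M' * (\<Prod>j\<in>J. real (M' i j choose M i j))" if MF: "M \<in> ?F" for M
    proof -
      let ?row = "\<lambda>N a. \<Prod>j\<in>J. w a j ^ N a j / fact (N a j)"
      have "wt I J w M = ?row M i * ?row M i' * prod (?row M) (I - {i,i'})"
        unfolding wt_def by (rule prod_two[OF fI i i' ne])
      also have "prod (?row M) (I - {i,i'}) = prod (?row M') (I - {i,i'})"
        using fibM(2)[OF MF] by (intro prod.cong) auto
      also have "?row M i * ?row M i' = (\<Prod>j\<in>J. w i j ^ M i j / fact (M i j) * (w i j ^ M i' j / fact (M i' j)))"
        by (simp only: w prod.distrib[symmetric])
      also have "\<dots> = (\<Prod>j\<in>J. w i j ^ M' i j / fact (M' i j) * real (M' i j choose M i j))"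
        by (intro prod.cong refl) (simp only: binom_split fibM(1)[OF MF])
      also have "\<dots> = ?row M' i * (\<Prod>j\<in>J. real (M' i j choose M i j))" by (simp only: prod.distrib)
      also have "?row M' i * (\<Prod>j\<in>J. real (M' i j choose M i j)) * prod (?row M') (I - {i,i'})
         = wt I' J w M' * (\<Prod>j\<in>J. real (M' i j choose M i j))"
        unfolding wt_def I'_def prod_rm[OF fI i i' ne] by simp
      finally show ?thesis .
    qed
    define \<psi> where "\<psi> u = M'(i := u, i' := (\<lambda>j. M' i j - u j))" for u :: "nat \<Rightarrow> nat"
    have bij: "bij_betw (\<lambda>M. M i) ?F (VV J (M' i) (\<rho> i))"
    proof (rule bij_betw_byWitness[where f'=\<psi>])
      show "\<forall>M\<in>?F. \<psi> (M i) = M"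
      proof
        fix M assume MF: "M \<in> ?F"
        show "\<psi> (M i) = M"
        proof (rule ext)+
          fix a j
          show "\<psi> (M i) a j = M a j" using fibM[OF MF] ne by (auto simp: \<psi>_def)
        qed
      qed
      show "\<forall>u\<in>VV J (M' i) (\<rho> i). \<psi> u i = u" using ne by (simp add: \<psi>_def)
      show "(\<lambda>M. M i) ` ?F \<subseteq> VV J (M' i) (\<rho> i)"
      proof (rule image_subsetI)
        fix M assume MF: "M \<in> ?F"
        then have "M \<in> Mats I J \<rho> \<sigma>" by simp
        then show "M i \<in> VV J (M' i) (\<rho> i)" using fibM[OF MF] i by (auto simp: Mats_def VV_def)
      qed
      show "\<psi> ` VV J (M' i) (\<rho> i) \<subseteq> ?F"
      proof (rule image_subsetI)
        fix u assume u: "u \<in> VV J (M' i) (\<rho> i)"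
        have usupp: "\<And>j. j \<notin> J \<Longrightarrow> u j = 0" and ule: "\<And>j. u j \<le> M' i j" and usum: "sum u J = \<rho> i"
          using u by (auto simp: VV_def)
        have "\<psi> u \<in> Mats I J \<rho> \<sigma>"
          unfolding Mats_def
        proof (intro CollectI conjI allI impI ballI)
          fix a b assume ab: "a \<notin> I \<or> b \<notin> J"
          show "\<psi> u a b = 0"
          proof (cases "a = i \<or> a = i'")
            case True
            then have "b \<notin> J" using ab i i' by auto
            then show ?thesis using True usupp supp'[of i b] by (auto simp: \<psi>_def)
          next
            case False
            then show ?thesis using ab supp'[of a b] by (auto simp: \<psi>_def I'_def)
          qed
        next
          fix a assume a: "a \<in> I"
          show "(\<Sum>j\<in>J. \<psi> u a j) = \<rho> a"
          proof (cases "a = i")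
            case True then show ?thesis using ne usum by (simp add: \<psi>_def)
          next
            case False
            show ?thesis
            proof (cases "a = i'")
              case True
              then have "(\<Sum>j\<in>J. \<psi> u a j) = (\<Sum>j\<in>J. M' i j - u j)" by (simp add: \<psi>_def)
              also have "\<dots> = (\<Sum>j\<in>J. M' i j) - sum u J" by (rule sum_subtractf_nat) (rule ule)
              finally show ?thesis using rowi usum True by simp
            next
              case False
              then show ?thesis using \<open>a \<noteq> i\<close> a rows'[of a] by (simp add: \<psi>_def I'_def \<rho>'_def)
            qed
          qed
        next
          fix b assume b: "b \<in> J"
          have "(\<Sum>a\<in>I. \<psi> u a b) = \<psi> u i b + \<psi> u i' b + (\<Sum>a\<in>I - {i,i'}. \<psi> u a b)"
            by (rule sum_two[OF fI i i' ne])
          also have "(\<Sum>a\<in>I - {i,i'}. \<psi> u a b) = (\<Sum>a\<in>I - {i,i'}. M' a b)"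
            by (intro sum.cong) (auto simp: \<psi>_def)
          also have "\<psi> u i b + \<psi> u i' b = M' i b" using ne ule[of b] by (simp add: \<psi>_def)
          also have "M' i b + (\<Sum>a\<in>I - {i,i'}. M' a b) = (\<Sum>a\<in>I'. M' a b)"
            unfolding I'_def using sum_rm[OF fI i i' ne, of "\<lambda>a. M' a b"] by simp
          finally show "(\<Sum>a\<in>I. \<psi> u a b) = \<sigma> b" using cols'[OF b] by simp
        qed
        moreover have "\<phi> (\<psi> u) = M'"
        proof (rule ext)+
          fix a j
          have "i' \<notin> I'" by (simp add: I'_def)
          then have "M' i' j = 0" using supp' by blast
          then show "\<phi> (\<psi> u) a j = M' a j" using ne ule[of j] by (auto simp: \<phi>_def \<psi>_def)
        qed
        ultimately show "\<psi> u \<in> ?F" by simp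
      qed
    qed
    have "(\<Sum>M\<in>?F. wt I J w M) = wt I' J w M' * (\<Sum>M\<in>?F. \<Prod>j\<in>J. real (M' i j choose M i j))"
      by (simp add: wtM sum_distrib_left)
    also have "(\<Sum>M\<in>?F. \<Prod>j\<in>J. real (M' i j choose M i j)) = (\<Sum>u\<in>VV J (M' i) (\<rho> i). \<Prod>j\<in>J. real (M' i j choose u j))"
      by (rule sum.reindex_bij_betw[OF bij])
    also have "\<dots> = real (\<rho> i + \<rho> i' choose \<rho> i)" using vmulti[OF fJ] rowi by simp
    finally show ?thesis by simp
  qed
  have "WW I J w \<rho> \<sigma> = (\<Sum>M'\<in>Mats I' J \<rho>' \<sigma>. real (\<rho> i + \<rho> i' choose \<rho> i) * wt I' J w M')"
    unfolding grp by (rule sum.cong) (auto simp: fib)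
  also have "\<dots> = real (\<rho> i + \<rho> i' choose \<rho> i) * WW I' J w \<rho>' \<sigma>"
    by (simp add: WW_def sum_distrib_left)
  finally show ?thesis by (simp add: I'_def \<rho>'_def)
qed

lemma WW_transpose: "WW I J w \<rho> \<sigma> = WW J I (\<lambda>j i. w i j) \<sigma> \<rho>"
proof -
  let ?h = "\<lambda>N::nat\<Rightarrow>nat\<Rightarrow>nat. (\<lambda>i j. N j i)"
  have bij: "bij_betw ?h (Mats J I \<sigma> \<rho>) (Mats I J \<rho> \<sigma>)"
    by (rule bij_betw_byWitness[where f'="?h"]) (auto simp: Mats_def)
  have "WW I J w \<rho> \<sigma> = (\<Sum>N\<in>Mats J I \<sigma> \<rho>. wt I J w (?h N))"
    unfolding WW_def by (rule sum.reindex_bij_betw[OF bij, symmetric])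
  also have "\<dots> = (\<Sum>N\<in>Mats J I \<sigma> \<rho>. wt J I (\<lambda>j i. w i j) N)"
    unfolding wt_def by (rule sum.cong[OF refl]) (rule prod.swap)
  finally show ?thesis by (simp add: WW_def)
qed

lemma col_merge:
  assumes fI: "finite I" and fJ: "finite J" and j: "j \<in> J" and j': "j' \<in> J" and ne: "j \<noteq> j'"
    and w: "\<And>i. w i j' = w i j"
  shows "WW I J w \<rho> \<sigma> = real (\<sigma> j + \<sigma> j' choose \<sigma> j) * WW I (J - {j'}) w \<rho> (\<sigma>(j := \<sigma> j + \<sigma> j'))"
  unfolding WW_transpose[of I J] WW_transpose[of I "J - {j'}"]
  by (rule row_merge[OF fJ fI j j' ne]) (simp add: w)

lemma full_merge:
  assumes fX: "finite X" and x: "x \<in> X" and x': "x' \<in> X" and ne: "x \<noteq> x'"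
    and w1: "\<And>j. w x' j = w x j" and w2: "\<And>i. w i x' = w i x"
  shows "\<exists>c>0. WW X X w \<rho> \<rho> = c * WW (X - {x'}) (X - {x'}) w (\<rho>(x := \<rho> x + \<rho> x')) (\<rho>(x := \<rho> x + \<rho> x'))"
proof -
  let ?c = "real (\<rho> x + \<rho> x' choose \<rho> x)"
  have "WW X X w \<rho> \<rho> = ?c * WW (X - {x'}) X w (\<rho>(x := \<rho> x + \<rho> x')) \<rho>"
    by (rule row_merge[OF fX fX x x' ne w1])
  also have "WW (X - {x'}) X w (\<rho>(x := \<rho> x + \<rho> x')) \<rho> = ?c * WW (X - {x'}) (X - {x'}) w (\<rho>(x := \<rho> x + \<rho> x')) (\<rho>(x := \<rho> x + \<rho> x'))"
    using fX by (intro col_merge[OF _ fX x x' ne w2]) auto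
  finally have "WW X X w \<rho> \<rho> = (?c * ?c) * WW (X - {x'}) (X - {x'}) w (\<rho>(x := \<rho> x + \<rho> x')) (\<rho>(x := \<rho> x + \<rho> x'))"
    by simp
  moreover have "?c * ?c > 0" by simp
  ultimately show ?thesis by blast
qed

lemma collapse:
  assumes "finite E" "finite R" "E \<inter> R = {}"
    and "\<And>x. x \<in> E \<Longrightarrow> rep x \<in> R \<and> (\<forall>j. w x j = w (rep x) j) \<and> (\<forall>i. w i x = w i (rep x))"
  shows "\<exists>c>0. WW (R \<union> E) (R \<union> E) w \<rho> \<rho>
     = c * WW R R w (\<lambda>y. \<rho> y + (\<Sum>x\<in>{x\<in>E. rep x = y}. \<rho> x)) (\<lambda>y. \<rho> y + (\<Sum>x\<in>{x\<in>E. rep x = y}. \<rho> x))"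
  using assms
proof (induction E arbitrary: \<rho> rule: finite_induct)
  case empty
  then show ?case by (intro exI[of _ 1]) simp
next
  case (insert x' E0)
  let ?x = "rep x'"
  have xR: "?x \<in> R" and w1: "\<And>j. w x' j = w ?x j" and w2: "\<And>i. w i x' = w i ?x"
    using insert.prems(3)[of x'] by auto
  have x'R: "x' \<notin> R" using insert.prems(2) by auto
  let ?X = "R \<union> insert x' E0"
  have fX: "finite ?X" using insert by simp
  have ne: "?x \<noteq> x'" using xR x'R by auto
  define \<rho>1 where "\<rho>1 = \<rho>(?x := \<rho> ?x + \<rho> x')"
  obtain c1 where c1: "c1 > 0" and e1: "WW ?X ?X w \<rho> \<rho> = c1 * WW (?X - {x'}) (?X - {x'}) w \<rho>1 \<rho>1"
    using full_merge[OF fX _ _ ne, of w \<rho>] xR w1 w2 unfolding \<rho>1_def by auto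
  have X': "?X - {x'} = R \<union> E0" using insert(2) x'R by auto
  obtain c0 where c0: "c0 > 0" and e0: "WW (R \<union> E0) (R \<union> E0) w \<rho>1 \<rho>1
     = c0 * WW R R w (\<lambda>y. \<rho>1 y + (\<Sum>x\<in>{x\<in>E0. rep x = y}. \<rho>1 x)) (\<lambda>y. \<rho>1 y + (\<Sum>x\<in>{x\<in>E0. rep x = y}. \<rho>1 x))"
    using insert.IH[of \<rho>1] insert.prems by auto
  have marg: "(\<lambda>y. \<rho>1 y + (\<Sum>x\<in>{x\<in>E0. rep x = y}. \<rho>1 x)) = (\<lambda>y. \<rho> y + (\<Sum>x\<in>{x\<in>insert x' E0. rep x = y}. \<rho> x))"
  proof
    fix y
    have s1: "(\<Sum>x\<in>{x\<in>E0. rep x = y}. \<rho>1 x) = (\<Sum>x\<in>{x\<in>E0. rep x = y}. \<rho> x)"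
      using insert.prems(2) xR by (intro sum.cong) (auto simp: \<rho>1_def)
    have fin: "finite {x\<in>E0. rep x = y}" using insert(1) by simp
    show "\<rho>1 y + (\<Sum>x\<in>{x\<in>E0. rep x = y}. \<rho>1 x) = \<rho> y + (\<Sum>x\<in>{x\<in>insert x' E0. rep x = y}. \<rho> x)"
    proof (cases "rep x' = y")
      case True
      then have "{x\<in>insert x' E0. rep x = y} = insert x' {x\<in>E0. rep x = y}" by auto
      then have "(\<Sum>x\<in>{x\<in>insert x' E0. rep x = y}. \<rho> x) = \<rho> x' + (\<Sum>x\<in>{x\<in>E0. rep x = y}. \<rho> x)"
        using fin insert(2) by simp
      then show ?thesis using s1 True by (simp add: \<rho>1_def)
    next
      case False
      then have "{x\<in>insert x' E0. rep x = y} = {x\<in>E0. rep x = y}" by auto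
      then show ?thesis using s1 False by (simp add: \<rho>1_def)
    qed
  qed
  show ?case
    using c1 c0 e1 e0 unfolding X' marg
    by (intro exI[of _ "c1 * c0"]) simp
qed



lemma dt_out_b: "\<bar>k\<bar> > b \<Longrightarrow> dt a b c k = 0"
  by (cases "k \<ge> 0") (auto simp: dt_def rf_neg)
lemma dt_out_c: "\<bar>k\<bar> > c \<Longrightarrow> dt a b c k = 0"
  by (cases "k \<ge> 0") (auto simp: dt_def rf_neg)

lemma sum3: "a \<noteq> b \<Longrightarrow> a \<noteq> c \<Longrightarrow> b \<noteq> c \<Longrightarrow> (\<Sum>x\<in>{a,b,c}. f x) = f a + f b + (f c :: 'x::comm_monoid_add)"
  by (simp add: ac_simps)
lemma prod3: "a \<noteq> b \<Longrightarrow> a \<noteq> c \<Longrightarrow> b \<noteq> c \<Longrightarrow> (\<Prod>x\<in>{a,b,c}. f x) = f a * f b * (f c :: 'x::comm_monoid_mult)"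
  by (simp add: ac_simps)

lemma sign_lemma:
  fixes A B C :: nat and k :: int
  assumes "\<bar>k\<bar> \<le> A" "\<bar>k\<bar> \<le> B" "\<bar>k\<bar> \<le> C"
  shows "(-1::real) ^ nat (int A + k) * (-1) ^ nat (int B - k) * (-1) ^ nat (int C + k) = (-1) ^ (A+B+C) * sg k"
proof (cases "k \<ge> 0")
  case True
  then obtain j where k: "k = int j" by (metis nonneg_eq_int)
  have e: "nat (int A + k) = A + j" "nat (int B - k) = B - j" "nat (int C + k) = C + j" "nat \<bar>k\<bar> = j"
    using assms k by auto
  have "A + j + (B - j) + (C + j) = (A+B+C) + j" using assms k by auto
  then show ?thesis unfolding e sg_def by (metis power_add)
next
  case False
  then obtain j where k: "k = - int j" by (metis nonpos_int_cases linorder_not_le less_imp_le)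
  have e: "nat (int A + k) = A - j" "nat (int B - k) = B + j" "nat (int C + k) = C - j" "nat \<bar>k\<bar> = j"
    using assms k by auto
  have s: "A - j + (B + j) + (C - j) + 2 * j = (A+B+C) + j" using assms k by auto
  have "(-1::real) ^ (A - j + (B + j) + (C - j)) = (-1) ^ (A - j + (B + j) + (C - j) + 2 * j)"
    by (simp only: power_add power_mult) simp
  moreover have "(-1::real)^(3*j) = (-1)^j" by (simp add: power_mult)
  ultimately show ?thesis unfolding e sg_def s by (simp add: power_add)
qed

lemma three_by_three:
  fixes A B C :: nat
  assumes d: "i0 \<noteq> i1" "i0 \<noteq> i2" "i1 \<noteq> i2"
    and v: "v i0 = 0" "v i1 = 1" "v i2 = 2"
    and s: "s i0 = A + B" "s i1 = A + C" "s i2 = B + C"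
  shows "WW {i0,i1,i2} {i0,i1,i2} (\<lambda>a b. v a - v b) s s = (-1) ^ (A+B+C) * 4 ^ B * DS A B C"
proof -
  let ?R = "{i0,i1,i2}"
  let ?w = "\<lambda>a b. v a - v b"
  define m where "m = min A (min B C)"
  define K where "K = {-int m..int m}"
  define Mk where "Mk k = (\<lambda>a b. if a = i0 \<and> b = i1 then nat (int A + k) else if a = i1 \<and> b = i0 then nat (int A - k)
      else if a = i0 \<and> b = i2 then nat (int B - k) else if a = i2 \<and> b = i0 then nat (int B + k)
      else if a = i1 \<and> b = i2 then nat (int C + k) else if a = i2 \<and> b = i1 then nat (int C - k) else 0)" for k :: int
  define Z where "Z = {M \<in> Mats ?R ?R s s. \<forall>a. M a a = 0}"
  have fR: "finite ?R" by simp
  have step1: "WW ?R ?R ?w s s = (\<Sum>M\<in>Z. wt ?R ?R ?w M)"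
    unfolding WW_def
  proof (rule sum.mono_neutral_right)
    show "finite (Mats ?R ?R s s)" by (rule finite_Mats) simp_all
    show "Z \<subseteq> Mats ?R ?R s s" by (auto simp: Z_def)
    show "\<forall>M\<in>Mats ?R ?R s s - Z. wt ?R ?R ?w M = 0"
    proof
      fix M assume M: "M \<in> Mats ?R ?R s s - Z"
      then obtain a where a: "M a a \<noteq> 0" by (auto simp: Z_def)
      have aR: "a \<in> ?R"
      proof (rule ccontr)
        assume "a \<notin> ?R"
        then have "M a a = 0" using M unfolding Mats_def by blast
        then show False using a by simp
      qed
      have "(\<Prod>b\<in>?R. ?w a b ^ M a b / fact (M a b)) = 0"
        using aR a by (intro prod_zero) auto
      then show "wt ?R ?R ?w M = 0" unfolding wt_def using aR by (intro prod_zero) auto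
    qed
  qed
  have eqs: "M i0 i1 + M i0 i2 = A + B \<and> M i1 i0 + M i2 i0 = A + B \<and> M i1 i0 + M i1 i2 = A + C
     \<and> M i0 i1 + M i2 i1 = A + C \<and> M i2 i0 + M i2 i1 = B + C \<and> M i0 i2 + M i1 i2 = B + C" if M: "M \<in> Z" for M
  proof -
    have z: "M i0 i0 = 0" "M i1 i1 = 0" "M i2 i2 = 0" using M by (auto simp: Z_def)
    have r: "\<And>a. a \<in> ?R \<Longrightarrow> (\<Sum>b\<in>?R. M a b) = s a" "\<And>b. b \<in> ?R \<Longrightarrow> (\<Sum>a\<in>?R. M a b) = s b"
      using M by (auto simp: Z_def Mats_def)
    show ?thesis using r(1)[of i0] r(1)[of i1] r(1)[of i2] r(2)[of i0] r(2)[of i1] r(2)[of i2] z s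
      unfolding sum3[OF d] by auto
  qed
  have supp: "M a b = 0" if "M \<in> Z" "a \<notin> ?R \<or> b \<notin> ?R" for M a b
    using that by (auto simp: Z_def Mats_def)
  have Mv: "Mk k i0 i1 = nat (int A + k)" "Mk k i1 i0 = nat (int A - k)" "Mk k i0 i2 = nat (int B - k)"
    "Mk k i2 i0 = nat (int B + k)" "Mk k i1 i2 = nat (int C + k)" "Mk k i2 i1 = nat (int C - k)"
    "Mk k i0 i0 = 0" "Mk k i1 i1 = 0" "Mk k i2 i2 = 0" for k
    using d unfolding Mk_def by auto
  have Mv0: "Mk k a b = 0" if ab: "a \<notin> ?R \<or> b \<notin> ?R" for k a b
  proof (cases "a \<notin> ?R")
    case True then show ?thesis by (simp add: Mk_def)
  next
    case False then have "b \<notin> ?R" using ab by blast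
    then show ?thesis by (simp add: Mk_def)
  qed
  have bij: "bij_betw Mk K Z"
  proof (rule bij_betw_byWitness[where f'="\<lambda>M. int (M i0 i1) - int A"])
    show "\<forall>k\<in>K. int (Mk k i0 i1) - int A = k" using Mv(1) by (auto simp: K_def m_def)
    show "\<forall>M\<in>Z. Mk (int (M i0 i1) - int A) = M"
    proof
      fix M assume M: "M \<in> Z"
      define k where "k = int (M i0 i1) - int A"
      have z: "M i0 i0 = 0" "M i1 i1 = 0" "M i2 i2 = 0" using M by (auto simp: Z_def)
      note E = eqs[OF M]
      have i1: "int (M i1 i0) = int A - k" using E unfolding k_def by linarith
      have i2: "int (M i0 i2) = int B - k" using E unfolding k_def by linarith
      have i3: "int (M i2 i0) = int B + k" using E unfolding k_def by linarith
      have i4: "int (M i1 i2) = int C + k" using E unfolding k_def by linarith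
      have i5: "int (M i2 i1) = int C - k" using E unfolding k_def by linarith
      have i0: "int (M i0 i1) = int A + k" unfolding k_def by simp
      show "Mk (int (M i0 i1) - int A) = M"
      proof (rule ext)+
        fix a b
        show "Mk (int (M i0 i1) - int A) a b = M a b"
        proof (cases "a \<in> ?R \<and> b \<in> ?R")
          case False
          then show ?thesis using Mv0 supp[OF M, of a b] by auto
        next
          case True
          then have a: "a = i0 \<or> a = i1 \<or> a = i2" and b: "b = i0 \<or> b = i1 \<or> b = i2" by auto
          have n: "M i0 i1 = nat (int A + k)" "M i1 i0 = nat (int A - k)" "M i0 i2 = nat (int B - k)"
            "M i2 i0 = nat (int B + k)" "M i1 i2 = nat (int C + k)" "M i2 i1 = nat (int C - k)"
            using arg_cong[OF i0, of nat] arg_cong[OF i1, of nat] arg_cong[OF i2, of nat]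
              arg_cong[OF i3, of nat] arg_cong[OF i4, of nat] arg_cong[OF i5, of nat] by simp_all
          show ?thesis unfolding k_def[symmetric]
            using a b z n Mv[of k] by (elim disjE) simp_all
        qed
      qed
    qed
    show "Mk ` K \<subseteq> Z"
    proof (rule image_subsetI)
      fix k assume k: "k \<in> K"
      then have kb: "\<bar>k\<bar> \<le> A" "\<bar>k\<bar> \<le> B" "\<bar>k\<bar> \<le> C" by (auto simp: K_def m_def)
      have n: "nat (int A + k) + nat (int B - k) = A + B" "nat (int A - k) + nat (int B + k) = A + B"
        "nat (int A - k) + nat (int C + k) = A + C" "nat (int A + k) + nat (int C - k) = A + C"
        "nat (int B + k) + nat (int C - k) = B + C" "nat (int B - k) + nat (int C + k) = B + C"
        using kb by auto
      show "Mk k \<in> Z"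
        unfolding Z_def Mats_def
      proof (intro CollectI conjI allI impI ballI)
        fix a b assume "a \<notin> ?R \<or> b \<notin> ?R" then show "Mk k a b = 0" by (rule Mv0)
      next
        fix a assume "a \<in> ?R"
        then have a: "a = i0 \<or> a = i1 \<or> a = i2" by auto
        have r: "Mk k i0 i0 + Mk k i0 i1 + Mk k i0 i2 = s i0" "Mk k i1 i0 + Mk k i1 i1 + Mk k i1 i2 = s i1"
          "Mk k i2 i0 + Mk k i2 i1 + Mk k i2 i2 = s i2" unfolding Mv s using n by linarith+
        show "(\<Sum>b\<in>?R. Mk k a b) = s a" unfolding sum3[OF d] using a r by (elim disjE) simp_all
      next
        fix b assume "b \<in> ?R"
        then have b: "b = i0 \<or> b = i1 \<or> b = i2" by auto
        have r: "Mk k i0 i0 + Mk k i1 i0 + Mk k i2 i0 = s i0" "Mk k i0 i1 + Mk k i1 i1 + Mk k i2 i1 = s i1"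
          "Mk k i0 i2 + Mk k i1 i2 + Mk k i2 i2 = s i2" unfolding Mv s using n by linarith+
        show "(\<Sum>a\<in>?R. Mk k a b) = s b" unfolding sum3[OF d] using b r by (elim disjE) simp_all
      next
        fix a show "Mk k a a = 0"
        proof (cases "a \<in> ?R")
          case True then show ?thesis using Mv(7-9) by auto
        next
          case False then show ?thesis by (intro Mv0) simp
        qed
      qed
    qed
    show "(\<lambda>M. int (M i0 i1) - int A) ` Z \<subseteq> K"
    proof (rule image_subsetI)
      fix M assume M: "M \<in> Z"
      show "int (M i0 i1) - int A \<in> K" using eqs[OF M] unfolding K_def m_def by auto
    qed
  qed
  have wtk: "wt ?R ?R ?w (Mk k) = (-1) ^ (A+B+C) * 4 ^ B * dt A B C k" if k: "k \<in> K" for k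
  proof -
    have kb: "\<bar>k\<bar> \<le> A" "\<bar>k\<bar> \<le> B" "\<bar>k\<bar> \<le> C" using k by (auto simp: K_def m_def)
    have f: "1 / fact (nat n) = rf n" if "n \<ge> 0" for n using that by (simp add: rf_def)
    have "wt ?R ?R ?w (Mk k) = (-1) ^ nat (int A + k) / fact (nat (int A + k)) * (1 / fact (nat (int A - k)))
        * ((-2) ^ nat (int B - k) / fact (nat (int B - k))) * (2 ^ nat (int B + k) / fact (nat (int B + k)))
        * ((-1) ^ nat (int C + k) / fact (nat (int C + k))) * (1 / fact (nat (int C - k)))"
      unfolding wt_def prod3[OF d] using d v by (simp add: Mv mult_ac)
    also have "\<dots> = ((-1::real) ^ nat (int A + k) * (-1) ^ nat (int B - k) * (-1) ^ nat (int C + k))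
        * (2 ^ nat (int B - k) * 2 ^ nat (int B + k))
        * (rf (int A + k) * rf (int A - k) * rf (int B + k) * rf (int B - k) * rf (int C + k) * rf (int C - k))"
    proof -
      have "(-2::real) ^ nat (int B - k) = (-1) ^ nat (int B - k) * 2 ^ nat (int B - k)"
        by (metis mult_minus1 power_mult_distrib mult_minus_left)
      then show ?thesis using kb by (simp add: f[symmetric] mult_ac)
    qed
    also have "2 ^ nat (int B - k) * 2 ^ nat (int B + k) = (4::real) ^ B"
    proof -
      have "nat (int B - k) + nat (int B + k) = 2 * B" using kb by auto
      then show ?thesis by (metis power_add power_mult numeral_Bit0 power2_eq_square mult_2 numeral_times_numeral semiring_norm(12))
    qed
    finally show ?thesis unfolding sign_lemma[OF kb] dt_def by (simp add: ac_simps)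
  qed
  have "WW ?R ?R ?w s s = (\<Sum>k\<in>K. wt ?R ?R ?w (Mk k))"
    unfolding step1 by (rule sum.reindex_bij_betw[OF bij, symmetric])
  also have "\<dots> = (\<Sum>k\<in>K. (-1) ^ (A+B+C) * 4 ^ B * dt A B C k)" by (rule sum.cong[OF refl]) (rule wtk)
  also have "\<dots> = (-1) ^ (A+B+C) * 4 ^ B * (\<Sum>k\<in>K. dt A B C k)" by (simp add: sum_distrib_left)
  also have "(\<Sum>k\<in>K. dt A B C k) = DS A B C"
    unfolding DS_def
  proof (rule sum.mono_neutral_left)
    show "K \<subseteq> {- int A..int A}" by (auto simp: K_def m_def)
    show "\<forall>i\<in>{- int A..int A} - K. dt (int A) (int B) (int C) i = 0"
    proof
      fix i assume "i \<in> {- int A..int A} - K"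
      then have "\<bar>i\<bar> > int B \<or> \<bar>i\<bar> > int C" by (auto simp: K_def m_def)
      then show "dt (int A) (int B) (int C) i = 0" using dt_out_b dt_out_c by blast
    qed
  qed simp
  finally show ?thesis .
qed



lemma prod_atMost_split: "(\<Prod>i\<le>(r::nat). f i) = (\<Prod>i<r. f i) * (f r :: 'x::comm_monoid_mult)"
  using prod.lessThan_Suc[of f r] by (simp add: lessThan_Suc_atMost mult.commute)

lemma sum_atMost_split: "(\<Sum>i\<le>(r::nat). f i) = (\<Sum>i<r. f i) + (f r :: 'x::comm_monoid_add)"
  using sum.lessThan_Suc[of f r] by (simp add: lessThan_Suc_atMost add.commute)

lemma Tpoly_WW:
  fixes v :: "nat \<Rightarrow> real"
  shows "Tpoly r e p (v r) v = (-1) ^ margin r e p r * WW {..r} {..r} (\<lambda>a b. v a - v b) (margin r e p) (margin r e p)"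
proof -
  let ?X = "{..r}"
  let ?w = "\<lambda>a b. v a - v b"
  let ?a = "margin r e p"
  let ?c = "margin r e p r"
  have sub: "Mset r e p \<subseteq> Mats ?X ?X ?a ?a"
    by (auto simp: Mset_def Mats_def not_le)
  have W: "WW ?X ?X ?w ?a ?a = (\<Sum>M\<in>Mset r e p. wt ?X ?X ?w M)"
    unfolding WW_def
  proof (rule sum.mono_neutral_right)
    show "finite (Mats ?X ?X ?a ?a)" by (rule finite_Mats) simp_all
    show "Mset r e p \<subseteq> Mats ?X ?X ?a ?a" by (rule sub)
    show "\<forall>M\<in>Mats ?X ?X ?a ?a - Mset r e p. wt ?X ?X ?w M = 0"
    proof
      fix M assume M: "M \<in> Mats ?X ?X ?a ?a - Mset r e p"
      then have "\<exists>i\<le>r. M i i \<noteq> 0" by (auto simp: Mset_def Mats_def not_le)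
      then obtain i where i: "i \<le> r" "M i i \<noteq> 0" by blast
      have "(\<Prod>j\<in>?X. ?w i j ^ M i j / fact (M i j)) = 0"
        using i by (intro prod_zero) auto
      then show "wt ?X ?X ?w M = 0" unfolding wt_def using i by (intro prod_zero) auto
    qed
  qed
  have tm: "(\<Prod>i<r. \<Prod>j<r. (v i - v j) ^ M i j) * (\<Prod>i<r. (v r - v i) ^ M i r) * (\<Prod>j<r. (v r - v j) ^ M r j)
        / (\<Prod>i\<le>r. \<Prod>j\<le>r. fact (M i j)) = (-1) ^ ?c * wt ?X ?X ?w M" if M: "M \<in> Mset r e p" for M
  proof -
    have Mrr: "M r r = 0" using M by (simp add: Mset_def)
    have colr: "(\<Sum>i\<le>r. M i r) = ?c" using M by (simp add: Mset_def)
    then have colr': "(\<Sum>i<r. M i r) = ?c" using Mrr by (simp add: sum_atMost_split)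
    have "wt ?X ?X ?w M = (\<Prod>i\<le>r. \<Prod>j\<le>r. ?w i j ^ M i j) / (\<Prod>i\<le>r. \<Prod>j\<le>r. fact (M i j))"
      unfolding wt_def by (simp add: prod_dividef)
    also have "(\<Prod>i\<le>r. \<Prod>j\<le>r. ?w i j ^ M i j) = (\<Prod>i<r. (\<Prod>j<r. ?w i j ^ M i j) * ?w i r ^ M i r) * ((\<Prod>j<r. ?w r j ^ M r j) * ?w r r ^ M r r)"
      by (simp only: prod_atMost_split)
    also have "\<dots> = (\<Prod>i<r. \<Prod>j<r. (v i - v j) ^ M i j) * (\<Prod>i<r. (v i - v r) ^ M i r) * (\<Prod>j<r. (v r - v j) ^ M r j)"
      using Mrr by (simp add: prod.distrib)
    also have "(\<Prod>i<r. (v i - v r) ^ M i r) = (\<Prod>i<r. (-1) ^ M i r * (v r - v i) ^ M i r)"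
      by (intro prod.cong refl) (metis minus_diff_eq mult_minus1 power_mult_distrib)
    also have "\<dots> = (-1) ^ ?c * (\<Prod>i<r. (v r - v i) ^ M i r)"
      by (simp add: prod.distrib power_sum[symmetric] colr')
    finally show ?thesis by (simp add: mult_ac)
  qed
  have "Tpoly r e p (v r) v = (\<Sum>M\<in>Mset r e p. (-1) ^ ?c * wt ?X ?X ?w M)"
    unfolding Tpoly_def by (rule sum.cong[OF refl]) (rule tm)
  also have "\<dots> = (-1) ^ ?c * WW ?X ?X ?w ?a ?a" unfolding W by (simp add: sum_distrib_left)
  finally show ?thesis .
qed

lemma sum_const_on: "(\<And>x. x \<in> S \<Longrightarrow> f x = e) \<Longrightarrow> sum f S = card S * (e::nat)"
  by simp

theorem mainTheorem5:
  fixes r e p :: nat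
  assumes "r \<ge> 2" and "e \<ge> 1" and "p \<le> (r * e) div 2"
  shows "\<exists>t z. Tpoly r e p t z \<noteq> 0"
proof -
  have r2: "r \<ge> 2" and e1: "e \<ge> 1" using assms by auto
  have p2: "2 * p \<le> r * e" using assms(3) by linarith
  define \<alpha> where "\<alpha> = r div 2"
  define \<gamma> where "\<gamma> = (if p \<le> \<alpha> * e then 0 else (1::nat))"
  define \<beta> where "\<beta> = r - \<alpha> - \<gamma>"
  define \<kappa> where "\<kappa> i = (if i < \<alpha> then 0 else if i < r - \<gamma> then 1 else (2::nat))" for i
  define v where "v i = real (\<kappa> i)" for i
  define c where "c = r * e - 2 * p"
  have a1: "\<alpha> \<ge> 1" "\<alpha> < r" "r \<le> 2 * \<alpha> + 1" "2 * \<alpha> \<le> r" using r2 by (auto simp: \<alpha>_def)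
  have g1: "\<gamma> = 1 \<Longrightarrow> r = 2 * \<alpha> + 1 \<and> \<alpha> * e < p"
  proof -
    assume g: "\<gamma> = 1"
    then have pa: "\<alpha> * e < p" by (auto simp: \<gamma>_def split: if_splits)
    have "r \<noteq> 2 * \<alpha>"
    proof
      assume "r = 2 * \<alpha>"
      then have "r * e = 2 * (\<alpha> * e)" by simp
      then show False using pa p2 by linarith
    qed
    then show ?thesis using a1 pa by auto
  qed
  have gcases: "\<gamma> = 0 \<or> \<gamma> = 1" by (auto simp: \<gamma>_def)
  have ineq1: "\<gamma> * e \<le> p"
    using gcases g1 a1 e1 by (metis le_trans less_imp_le mult_1 mult_le_mono1 mult_zero_left zero_le)
  have ineq2: "p \<le> (\<alpha> + \<gamma>) * e"
  proof (cases "\<gamma> = 0")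
    case True then show ?thesis by (auto simp: \<gamma>_def split: if_splits)
  next
    case False
    then have "\<gamma> = 1" "r = 2 * \<alpha> + 1" using gcases g1 by auto
    then have "r * e = 2 * (\<alpha> * e) + e" "(\<alpha> + \<gamma>) * e = \<alpha> * e + e" by (simp_all add: algebra_simps)
    then show ?thesis using p2 by linarith
  qed
  have bg: "\<beta> + \<gamma> = r - \<alpha>" "\<beta> \<ge> 1" using gcases g1 a1 by (auto simp: \<beta>_def)
  have ineq3: "p \<le> (\<beta> + \<gamma>) * e"
  proof -
    have "r \<le> 2 * (r - \<alpha>)" using a1 by linarith
    then have "r * e \<le> 2 * (r - \<alpha>) * e" by (rule mult_le_mono1)
    then have "2 * ((r - \<alpha>) * e) \<ge> r * e" by (simp add: mult.assoc)
    then show ?thesis using p2 unfolding bg(1) by linarith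
  qed
  define A where "A = p - \<gamma> * e"
  define B where "B = (\<alpha> + \<gamma>) * e - p"
  define C where "C = (\<beta> + \<gamma>) * e - p"
  have sumr: "\<alpha> + \<beta> + \<gamma> = r" using bg a1 by simp
  have AB: "A + B = \<alpha> * e" using ineq1 ineq2 unfolding A_def B_def by (simp add: algebra_simps)
  have AC: "A + C = \<beta> * e" using ineq1 ineq3 unfolding A_def C_def by (simp add: algebra_simps)
  have BC: "B + C = \<gamma> * e + c"
  proof -
    have "r * e = \<alpha> * e + \<beta> * e + \<gamma> * e" using sumr by (metis add_mult_distrib)
    then show ?thesis using ineq2 ineq3 p2 unfolding B_def C_def c_def by (simp add: algebra_simps)
  qed
  let ?X = "{..r}"
  let ?R = "{0, \<alpha>, r}"
  let ?E = "?X - ?R"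
  let ?w = "\<lambda>a b. v a - v b"
  let ?a = "margin r e p"
  define rep where "rep i = (if \<kappa> i = 0 then 0 else if \<kappa> i = 1 then \<alpha> else r)" for i
  have k0: "\<kappa> 0 = 0" "\<kappa> \<alpha> = 1" "\<kappa> r = 2" using a1 bg gcases g1 by (auto simp: \<kappa>_def)
  have krep: "\<kappa> (rep i) = \<kappa> i" for i using k0 by (auto simp: rep_def \<kappa>_def split: if_splits)
  have XRE: "?R \<union> ?E = ?X" using a1 by auto
  obtain c0 where c0: "c0 > 0" and col: "WW (?R \<union> ?E) (?R \<union> ?E) ?w ?a ?a
      = c0 * WW ?R ?R ?w (\<lambda>y. ?a y + (\<Sum>x\<in>{x\<in>?E. rep x = y}. ?a x)) (\<lambda>y. ?a y + (\<Sum>x\<in>{x\<in>?E. rep x = y}. ?a x))"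
  proof -
    have prem: "rep x \<in> ?R \<and> (\<forall>j. ?w x j = ?w (rep x) j) \<and> (\<forall>i. ?w i x = ?w i (rep x))" for x
      using krep[of x] unfolding v_def by (simp add: rep_def)
    have "finite ?E" "finite ?R" "?E \<inter> ?R = {}" by auto
    from collapse[OF this prem] show ?thesis using that by blast
  qed
  define s where "s = (\<lambda>y. ?a y + (\<Sum>x\<in>{x\<in>?E. rep x = y}. ?a x))"
  have s0: "s 0 = A + B"
  proof -
    have S: "{x\<in>?E. rep x = 0} = {1..<\<alpha>}" using a1 bg by (auto simp: rep_def \<kappa>_def)
    have "(\<Sum>x\<in>{1..<\<alpha>}. ?a x) = card {1..<\<alpha>} * e" using a1 by (intro sum_const_on) (auto simp: margin_def)
    then have "s 0 = e + (\<alpha> - 1) * e" unfolding s_def S using a1 by (simp add: margin_def)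
    also have "\<dots> = \<alpha> * e" using a1 by (metis add.commute le_add_diff_inverse mult_Suc plus_1_eq_Suc)
    finally show ?thesis using AB by simp
  qed
  have s1: "s \<alpha> = A + C"
  proof -
    have S: "{x\<in>?E. rep x = \<alpha>} = {\<alpha>+1..<r - \<gamma>}" using a1 bg gcases by (auto simp: rep_def \<kappa>_def)
    have "(\<Sum>x\<in>{\<alpha>+1..<r - \<gamma>}. ?a x) = card {\<alpha>+1..<r - \<gamma>} * e" by (intro sum_const_on) (auto simp: margin_def)
    then have "s \<alpha> = e + (\<beta> - 1) * e" unfolding s_def S using a1 bg by (simp add: margin_def \<beta>_def add.commute)
    also have "\<dots> = \<beta> * e" using bg by (metis add.commute le_add_diff_inverse mult_Suc plus_1_eq_Suc)
    finally show ?thesis using AC by simp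
  qed
  have s2: "s r = B + C"
  proof -
    have S: "{x\<in>?E. rep x = r} = {r - \<gamma>..<r}" using a1 bg gcases by (auto simp: rep_def \<kappa>_def)
    have "(\<Sum>x\<in>{r - \<gamma>..<r}. ?a x) = card {r - \<gamma>..<r} * e" by (intro sum_const_on) (auto simp: margin_def)
    then have "s r = c + \<gamma> * e" unfolding s_def S using a1 bg gcases by (simp add: margin_def c_def)
    then show ?thesis using BC by simp
  qed
  have d: "0 \<noteq> \<alpha>" "0 \<noteq> r" "\<alpha> \<noteq> r" using a1 by auto
  have vv: "v 0 = 0" "v \<alpha> = 1" "v r = 2" using k0 by (simp_all add: v_def)
  have W3: "WW ?R ?R ?w s s = (-1) ^ (A+B+C) * 4 ^ B * DS A B C"
    by (rule three_by_three[OF d vv s0 s1 s2])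
  have "Tpoly r e p (v r) v = (-1) ^ ?a r * WW ?X ?X ?w ?a ?a" by (rule Tpoly_WW)
  also have "\<dots> = (-1) ^ ?a r * (c0 * ((-1) ^ (A+B+C) * 4 ^ B * DS A B C))"
    using col W3 unfolding XRE s_def by simp
  finally have "Tpoly r e p (v r) v \<noteq> 0" using c0 DS_pos[of A B C] by simp
  then show ?thesis by blast
qed


end
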